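(* Consider an instance of the max-min fair curriculum-based course timetabling (MMF-CB-CTT) problem with set of courses $C$, set of rooms $R$, set of periods $P$ and curricula $U\subseteq\mathcal{P}(C)$. Fix a period $p\in P$ and a feasible timetable in which the set $C_p$ of courses scheduled in $p$ is fixed, and everything except the rooms of the courses in $C_p$ is fixed; assume (adding dummy courses or dummy rooms if necessary) $|C_p|=|R|$. For $e\in C_p$ let $U_e=\{u\in U: e\in u\}$, and for $r\in R$ and $u\in U_e$ let $c_{e\to r}(u)$ denote the penalty $c(u,\tau)$ of curriculum $u$ in the completed timetable $\tau$ when $e$ is assigned to room $r$. Then the problem of choosing the room assignment for the courses of $C_p$ so that the resulting allocation vector is max-min fair (among all room assignments for period $p$ with the rest fixed) is equivalent to the GLBOP whose ground set is the edge set $E=\{\{e,r\}: e\in C_p, r\in R\}$ of the complete bipartite graph on $C_p\cup R$, whose feasible solutions are the perfect matchings of this graph, and whose weights are the multisets $w(e,r)=\biguplus_{u\in U_e}\{c_{e\to r}(u)\}$; i.e. the room assignment subproblem is $$\min_{\preceq}\ \biguplus_{\{e,r\}\in S} w(e,r)\quad\text{s.t. } S \text{ a perfect matching}.$$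
   Context: CB-CTT: courses consist of events to be assigned to resources (period, room); each curriculum is a set of courses no two of which may be taught in the same period (hard constraint), so each curriculum contains at most one course of $C_p$. The penalty $c(u,\tau)=\sum_{i=1}^4 c_{Si}(u,\tau)$ of curriculum $u$ in timetable $\tau$ is the CB-CTT objective (sum of weighted penalties for soft constraints RoomCapacity, MinWorkingDays, IsolatedLectures, RoomStability) restricted to events of courses in $u$. The allocation vector of $\tau$ is $A(\tau)=(c(u_1,\tau),\dots,c(u_k,\tau))$ for curricula $u_1,\dots,u_k$; $\tau$ is max-min fair if $A(\tau)$ sorted non-increasingly is lexicographically minimal among feasible timetables. GLBOP and the comparison $\preceq$ of multisets: sort the multisets non-increasingly and compare the sequences lexicographically, where a proper prefix is smaller; the GLBOP asks for a feasible solution $S$ minimizing $\biguplus_{e\in S}w(e)$ with respect to $\preceq$. *)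

theory Defs
  imports Main "HOL-Library.Multiset"
begin

section \<open>CB-CTT instances (ITC-2007 track 3 formulation)\<close>

text \<open>Periods are the naturals 0 ..< days*slots; period q lies on day q div slots.\<close>

record ('c, 'r, 't) cbctt =
  courses   :: "'c set"
  rooms     :: "'r set"
  days      :: nat
  slots     :: nat
  curricula :: "'c set set"
  lectures  :: "'c \<Rightarrow> nat"
  students  :: "'c \<Rightarrow> nat"
  min_days  :: "'c \<Rightarrow> nat"
  teacher   :: "'c \<Rightarrow> 't"
  unavail   :: "'c \<Rightarrow> nat set"
  capacity  :: "'r \<Rightarrow> nat"

type_synonym ('c, 'r) timetable = "'c \<times> nat \<Rightarrow> nat \<times> 'r"

definition wf_inst :: "('c, 'r, 't) cbctt \<Rightarrow> bool" where
  "wf_inst I \<longleftrightarrow> finite (courses I) \<and> finite (rooms I) \<and> curricula I \<subseteq> Pow (courses I)"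

definition periods :: "('c, 'r, 't) cbctt \<Rightarrow> nat set" where
  "periods I = {..< days I * slots I}"

definition events :: "('c, 'r, 't) cbctt \<Rightarrow> ('c \<times> nat) set" where
  "events I = {(c, i). c \<in> courses I \<and> i < lectures I c}"

abbreviation per :: "('c, 'r) timetable \<Rightarrow> 'c \<times> nat \<Rightarrow> nat" where
  "per \<tau> ev \<equiv> fst (\<tau> ev)"

abbreviation room :: "('c, 'r) timetable \<Rightarrow> 'c \<times> nat \<Rightarrow> 'r" where
  "room \<tau> ev \<equiv> snd (\<tau> ev)"

text \<open>Hard constraints: Lectures, RoomOccupancy, Conflicts, Availability.\<close>
definition feasible :: "('c, 'r, 't) cbctt \<Rightarrow> ('c, 'r) timetable \<Rightarrow> bool" where
  "feasible I \<tau> \<longleftrightarrow>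
     (\<forall>ev \<in> events I. per \<tau> ev \<in> periods I \<and> room \<tau> ev \<in> rooms I) \<and>
     (\<forall>c i j. i < lectures I c \<and> j < lectures I c \<and> i \<noteq> j \<and> c \<in> courses I
              \<longrightarrow> per \<tau> (c, i) \<noteq> per \<tau> (c, j)) \<and>
     (\<forall>ev \<in> events I. \<forall>ev' \<in> events I. ev \<noteq> ev' \<longrightarrow> \<tau> ev \<noteq> \<tau> ev') \<and>
     (\<forall>(c, i) \<in> events I. \<forall>(c', j) \<in> events I. c \<noteq> c' \<and>
         ((\<exists>u \<in> curricula I. c \<in> u \<and> c' \<in> u) \<or> teacher I c = teacher I c')
         \<longrightarrow> per \<tau> (c, i) \<noteq> per \<tau> (c', j)) \<and>
     (\<forall>(c, i) \<in> events I. per \<tau> (c, i) \<notin> unavail I c)"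

text \<open>Soft constraints, restricted to a course / curriculum, with the standard weights
  RoomCapacity 1, MinWorkingDays 5, IsolatedLectures 2, RoomStability 1.\<close>

definition room_cap_pen :: "('c, 'r, 't) cbctt \<Rightarrow> ('c, 'r) timetable \<Rightarrow> 'c \<Rightarrow> nat" where
  "room_cap_pen I \<tau> c = (\<Sum>i<lectures I c. students I c - capacity I (room \<tau> (c, i)))"

definition min_days_pen :: "('c, 'r, 't) cbctt \<Rightarrow> ('c, 'r) timetable \<Rightarrow> 'c \<Rightarrow> nat" where
  "min_days_pen I \<tau> c = min_days I c - card ((\<lambda>i. per \<tau> (c, i) div slots I) ` {..<lectures I c})"

definition room_stab_pen :: "('c, 'r, 't) cbctt \<Rightarrow> ('c, 'r) timetable \<Rightarrow> 'c \<Rightarrow> nat" where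
  "room_stab_pen I \<tau> c = card ((\<lambda>i. room \<tau> (c, i)) ` {..<lectures I c}) - 1"

definition isolated_pen :: "('c, 'r, 't) cbctt \<Rightarrow> ('c, 'r) timetable \<Rightarrow> 'c set \<Rightarrow> nat" where
  "isolated_pen I \<tau> u =
     (\<Sum>c\<in>u. card {i. i < lectures I c \<and>
        \<not> (\<exists>c' \<in> u. \<exists>j < lectures I c'.
              per \<tau> (c', j) div slots I = per \<tau> (c, i) div slots I \<and>
              (per \<tau> (c', j) + 1 = per \<tau> (c, i) \<or> per \<tau> (c, i) + 1 = per \<tau> (c', j)))})"

definition cur_pen :: "('c, 'r, 't) cbctt \<Rightarrow> ('c, 'r) timetable \<Rightarrow> 'c set \<Rightarrow> nat" where
  "cur_pen I \<tau> u =
     (\<Sum>c\<in>u. 1 * room_cap_pen I \<tau> c + 5 * min_days_pen I \<tau> c + 1 * room_stab_pen I \<tau> c)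
     + 2 * isolated_pen I \<tau> u"

text \<open>Allocation vector (as the multiset of its entries; only its sorted version matters).\<close>
definition alloc :: "('c, 'r, 't) cbctt \<Rightarrow> ('c, 'r) timetable \<Rightarrow> nat multiset" where
  "alloc I \<tau> = image_mset (cur_pen I \<tau>) (mset_set (curricula I))"

text \<open>Lexicographic comparison of sequences, a proper prefix being smaller.\<close>
definition lex_le :: "nat list \<Rightarrow> nat list \<Rightarrow> bool" where
  "lex_le xs ys \<longleftrightarrow> xs = ys \<or> (xs, ys) \<in> lexord {(a, b). a < b}"

definition sort_desc :: "nat multiset \<Rightarrow> nat list" where
  "sort_desc M = rev (sorted_list_of_multiset M)"

definition mset_preceq :: "nat multiset \<Rightarrow> nat multiset \<Rightarrow> bool" where
  "mset_preceq M N \<longleftrightarrow> lex_le (sort_desc M) (sort_desc N)"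

definition max_min_fair ::
  "('c, 'r, 't) cbctt \<Rightarrow> ('c, 'r) timetable set \<Rightarrow> ('c, 'r) timetable \<Rightarrow> bool" where
  "max_min_fair I F \<tau> \<longleftrightarrow> \<tau> \<in> F \<and>
     (\<forall>\<tau>' \<in> F. lex_le (sort_desc (alloc I \<tau>)) (sort_desc (alloc I \<tau>')))"

definition glbop_opt :: "'e set set \<Rightarrow> ('e \<Rightarrow> nat multiset) \<Rightarrow> 'e set \<Rightarrow> bool" where
  "glbop_opt Feas w S \<longleftrightarrow> S \<in> Feas \<and>
     (\<forall>S' \<in> Feas. mset_preceq (\<Sum>e\<in>S. w e) (\<Sum>e\<in>S'. w e))"

text \<open>Perfect matchings of the complete bipartite graph on A \<union> B; an edge {a,b} is
  represented by the pair (a,b).\<close>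
definition perfect_matchings :: "'a set \<Rightarrow> 'b set \<Rightarrow> ('a \<times> 'b) set set" where
  "perfect_matchings A B = {S. S \<subseteq> A \<times> B \<and>
      (\<forall>a\<in>A. \<exists>!b. (a, b) \<in> S) \<and> (\<forall>b\<in>B. \<exists>!a. (a, b) \<in> S)}"

definition courses_at :: "('c, 'r, 't) cbctt \<Rightarrow> ('c, 'r) timetable \<Rightarrow> nat \<Rightarrow> 'c set" where
  "courses_at I \<tau> p = {c. \<exists>i. (c, i) \<in> events I \<and> per \<tau> (c, i) = p}"

definition room_nbhd ::
  "('c, 'r, 't) cbctt \<Rightarrow> ('c, 'r) timetable \<Rightarrow> nat \<Rightarrow> ('c, 'r) timetable set" where
  "room_nbhd I \<tau>0 p = {\<tau>. feasible I \<tau> \<and> (\<forall>ev. per \<tau> ev = per \<tau>0 ev) \<and>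
      (\<forall>ev. ev \<notin> events I \<or> per \<tau>0 ev \<noteq> p \<longrightarrow> \<tau> ev = \<tau>0 ev)}"

definition matching_of ::
  "('c, 'r, 't) cbctt \<Rightarrow> ('c, 'r) timetable \<Rightarrow> nat \<Rightarrow> ('c, 'r) timetable \<Rightarrow> ('c \<times> 'r) set" where
  "matching_of I \<tau>0 p \<tau> = {(c, room \<tau> (c, i)) | c i. (c, i) \<in> events I \<and> per \<tau>0 (c, i) = p}"

definition assign_room ::
  "('c, 'r) timetable \<Rightarrow> nat \<Rightarrow> 'c \<Rightarrow> 'r \<Rightarrow> ('c, 'r) timetable" where
  "assign_room \<tau>0 p e r = (\<lambda>ev. if fst ev = e \<and> per \<tau>0 ev = p then (p, r) else \<tau>0 ev)"

definition room_weight ::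
  "('c, 'r, 't) cbctt \<Rightarrow> ('c, 'r) timetable \<Rightarrow> nat \<Rightarrow> 'c \<times> 'r \<Rightarrow> nat multiset" where
  "room_weight I \<tau>0 p = (\<lambda>(e, r).
     image_mset (\<lambda>u. cur_pen I (assign_room \<tau>0 p e r) u)
                (mset_set {u \<in> curricula I. e \<in> u}))"

end

theory Submission imports Defs "HOL-Library.Multiset_Order" begin

lemma sd_unique:
  assumes "sorted_wrt (\<ge>) xs" "mset xs = M"
  shows "sort_desc M = xs"
proof -
  have "sorted (rev xs)" using assms(1) by (simp add: sorted_wrt_rev)
  have "sorted_list_of_multiset M = sort (rev xs)"
    by (metis assms(2) mset_rev sorted_list_of_multiset_mset)
  also have "\<dots> = rev xs" using \<open>sorted (rev xs)\<close> by (simp add: sorted_sort_id)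
  finally show ?thesis by (simp add: sort_desc_def)
qed

lemma sd_sorted: "sorted_wrt (\<ge>) (sort_desc M)"
  by (simp add: sort_desc_def sorted_wrt_rev)

lemma mset_sd[simp]: "mset (sort_desc M) = M"
  by (simp add: sort_desc_def)

lemma sd_empty[simp]: "sort_desc {#} = []"
  by (simp add: sort_desc_def)

lemma sd_cons:
  assumes "M \<noteq> {#}"
  shows "sort_desc M = Max_mset M # sort_desc (M - {#Max_mset M#})"
proof (rule sd_unique)
  have "set (sort_desc (M - {#Max_mset M#})) \<subseteq> set_mset M"
    by (metis in_diffD mset_sd set_mset_mset subsetI)
  hence "\<forall>y\<in>set (sort_desc (M - {#Max_mset M#})). y \<le> Max_mset M"
    by auto
  thus "sorted_wrt (\<ge>) (Max_mset M # sort_desc (M - {#Max_mset M#}))"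
    using sd_sorted by simp
  show "mset (Max_mset M # sort_desc (M - {#Max_mset M#})) = M"
    using assms by simp
qed

lemma sd_ne: "M \<noteq> {#} \<Longrightarrow> sort_desc M \<noteq> []"
  by (metis mset_sd mset.simps(1))

lemma lex_le_iff: "lex_le (sort_desc M) (sort_desc N) \<longleftrightarrow> M \<le> (N :: nat multiset)"
proof (induction "size M" arbitrary: M N rule: less_induct)
  case less
  show ?case
  proof (cases "M = {#}")
    case True
    then show ?thesis
      by (cases "sort_desc N") (auto simp: lex_le_def)
  next
    case Mne: False
    show ?thesis
    proof (cases "N = {#}")
      case True
      then show ?thesis using Mne sd_ne[OF Mne]
        by (auto simp: lex_le_def)
    next
      case Nne: False
      define a where "a = Max_mset M"
      define b where "b = Max_mset N"
      have sM: "sort_desc M = a # sort_desc (M - {#a#})" using sd_cons[OF Mne] a_def by simp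
      have sN: "sort_desc N = b # sort_desc (N - {#b#})" using sd_cons[OF Nne] b_def by simp
      have aM: "a \<in># M" using Mne a_def by simp
      have bN: "b \<in># N" using Nne b_def by simp
      have lexc: "lex_le (sort_desc M) (sort_desc N) \<longleftrightarrow>
          a < b \<or> (a = b \<and> lex_le (sort_desc (M - {#a#})) (sort_desc (N - {#b#})))"
        unfolding sM sN lex_le_def by auto
      show ?thesis
      proof (cases "a < b")
        case True
        then have "M < N" using Max_lt_imp_lt_mset[OF Nne] a_def b_def by simp
        then show ?thesis using lexc True by simp
      next
        case F1: False
        show ?thesis
        proof (cases "b < a")
          case True
          then have "N < M" using Max_lt_imp_lt_mset[OF Mne] a_def b_def by simp
          then show ?thesis using lexc True by auto
        next
          case False
          with F1 have ab: "a = b" by simp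
          have sz: "size (M - {#a#}) < size M" using aM by (simp add: size_Diff1_less)
          have "M \<le> N \<longleftrightarrow> (M - {#a#}) + {#a#} \<le> (N - {#a#}) + {#a#}"
            using aM bN ab by simp
          also have "\<dots> \<longleftrightarrow> M - {#a#} \<le> N - {#a#}" by (rule add_le_cancel_right)
          finally show ?thesis using lexc ab less(1)[OF sz] by simp
        qed
      qed
    qed
  qed
qed

lemma preceq_cancel: "mset_preceq (K + M) (K + N) \<longleftrightarrow> mset_preceq M N"
  unfolding mset_preceq_def lex_le_iff by (rule add_le_cancel_left)


lemma cur_pen_cong:
  assumes "\<forall>c\<in>u. \<forall>i<lectures I c. \<tau> (c,i) = \<tau>' (c,i)"
  shows "cur_pen I \<tau> u = cur_pen I \<tau>' u"
proof -
  have rc: "room_cap_pen I \<tau> c = room_cap_pen I \<tau>' c" if "c \<in> u" for c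
    using assms that unfolding room_cap_pen_def by (auto intro!: sum.cong)
  have md: "min_days_pen I \<tau> c = min_days_pen I \<tau>' c" if "c \<in> u" for c
    using assms that unfolding min_days_pen_def
    by (metis (no_types, lifting) image_cong lessThan_iff)
  have rs: "room_stab_pen I \<tau> c = room_stab_pen I \<tau>' c" if "c \<in> u" for c
    using assms that unfolding room_stab_pen_def
    by (metis (no_types, lifting) image_cong lessThan_iff)
  have ip: "isolated_pen I \<tau> u = isolated_pen I \<tau>' u"
    unfolding isolated_pen_def
  proof (rule sum.cong[OF refl])
    fix c assume c: "c \<in> u"
    show "card {i. i < lectures I c \<and>
        \<not> (\<exists>c' \<in> u. \<exists>j < lectures I c'.
              per \<tau> (c', j) div slots I = per \<tau> (c, i) div slots I \<and>
              (per \<tau> (c', j) + 1 = per \<tau> (c, i) \<or> per \<tau> (c, i) + 1 = per \<tau> (c', j)))} =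
        card {i. i < lectures I c \<and>
        \<not> (\<exists>c' \<in> u. \<exists>j < lectures I c'.
              per \<tau>' (c', j) div slots I = per \<tau>' (c, i) div slots I \<and>
              (per \<tau>' (c', j) + 1 = per \<tau>' (c, i) \<or> per \<tau>' (c, i) + 1 = per \<tau>' (c', j)))}"
      apply (rule arg_cong[where f=card], rule Collect_cong, rule conj_cong[OF refl])
      apply (rule arg_cong[where f=Not])
      apply (rule bex_cong[OF refl])
      apply (rule ex_cong1)
      using assms c by (metis (no_types, lifting))
  qed
  show ?thesis unfolding cur_pen_def using rc md rs ip
    by (metis (no_types, lifting) sum.cong)
qed

lemma sum_image_mset_UN:
  assumes "finite A" "\<And>c. c \<in> A \<Longrightarrow> finite (B c)"
    "\<And>c c'. c \<in> A \<Longrightarrow> c' \<in> A \<Longrightarrow> c \<noteq> c' \<Longrightarrow> B c \<inter> B c' = {}"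
  shows "(\<Sum>c\<in>A. image_mset f (mset_set (B c))) = image_mset f (mset_set (\<Union>c\<in>A. B c))"
  using assms
proof (induction A rule: finite_induct)
  case empty
  then show ?case by simp
next
  case (insert x F)
  have d: "B x \<inter> (\<Union>c\<in>F. B c) = {}" using insert.prems(2) insert.hyps(2) by blast
  have "mset_set (\<Union>c\<in>insert x F. B c) = mset_set (B x) + mset_set (\<Union>c\<in>F. B c)"
    using mset_set_Union[OF _ _ d] insert by simp
  then show ?case using insert by (simp add: image_mset_union)
qed

lemma pm_of_bij:
  assumes "inj_on \<rho> A" "\<rho> ` A = B"
  shows "(\<lambda>c. (c, \<rho> c)) ` A \<in> perfect_matchings A B"
  unfolding perfect_matchings_def using assms
  by (auto simp: inj_on_def)


theorem theorem2:
  fixes I :: "('c, 'r, 't) cbctt" and \<tau>0 :: "('c, 'r) timetable" and p :: nat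
  assumes "wf_inst I"
    and "p \<in> periods I"
    and "feasible I \<tau>0"
    and "card (courses_at I \<tau>0 p) = card (rooms I)"
  shows "perfect_matchings (courses_at I \<tau>0 p) (rooms I)
           = matching_of I \<tau>0 p ` room_nbhd I \<tau>0 p
       \<and> (\<forall>\<tau> \<in> room_nbhd I \<tau>0 p.
            max_min_fair I (room_nbhd I \<tau>0 p) \<tau> \<longleftrightarrow>
            glbop_opt (perfect_matchings (courses_at I \<tau>0 p) (rooms I))
                      (room_weight I \<tau>0 p) (matching_of I \<tau>0 p \<tau>))"
proof -
  define Cp where "Cp = courses_at I \<tau>0 p"
  define N where "N = room_nbhd I \<tau>0 p"
  define PM where "PM = perfect_matchings Cp (rooms I)"
  have finC: "finite (courses I)" and finR: "finite (rooms I)"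
    and curs: "curricula I \<subseteq> Pow (courses I)" using assms(1) by (auto simp: wf_inst_def)
  have finU: "finite (curricula I)" using curs finC
    by (meson finite_Pow_iff finite_subset)
  have Cp_sub: "Cp \<subseteq> courses I" unfolding Cp_def courses_at_def events_def by auto
  have finCp: "finite Cp" using Cp_sub finC finite_subset by auto
  note fe0 = assms(3)[unfolded feasible_def]
  have F0: "\<forall>ev \<in> events I. per \<tau>0 ev \<in> periods I \<and> room \<tau>0 ev \<in> rooms I"
    using fe0 by (rule conjunct1)
  have F1': "\<forall>c i j. i < lectures I c \<and> j < lectures I c \<and> i \<noteq> j \<and> c \<in> courses I
              \<longrightarrow> per \<tau>0 (c, i) \<noteq> per \<tau>0 (c, j)"
    using conjunct2[OF fe0] by (rule conjunct1)
  have F4: "\<forall>(c, i) \<in> events I. \<forall>(c', j) \<in> events I. c \<noteq> c' \<and>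
         ((\<exists>u \<in> curricula I. c \<in> u \<and> c' \<in> u) \<or> teacher I c = teacher I c')
         \<longrightarrow> per \<tau>0 (c, i) \<noteq> per \<tau>0 (c', j)"
    using conjunct2[OF conjunct2[OF conjunct2[OF fe0]]] by (rule conjunct1)
  have occ0: "\<forall>ev \<in> events I. \<forall>ev' \<in> events I. ev \<noteq> ev' \<longrightarrow> \<tau>0 ev \<noteq> \<tau>0 ev'"
    using conjunct2[OF conjunct2[OF fe0]] by (rule conjunct1)
  have unav0: "\<forall>(c, i) \<in> events I. per \<tau>0 (c, i) \<notin> unavail I c"
    using conjunct2[OF conjunct2[OF conjunct2[OF fe0]]] by (rule conjunct2)
  have F1: "i = j" if "(c,i) \<in> events I" "per \<tau>0 (c,i) = p" "(c,j) \<in> events I" "per \<tau>0 (c,j) = p"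
    for c i j using F1' that unfolding events_def by auto
  have F2: "c = c'" if h: "u \<in> curricula I" "c \<in> u" "c' \<in> u" "c \<in> Cp" "c' \<in> Cp" for u c c'
  proof (rule ccontr)
    assume ne: "c \<noteq> c'"
    obtain i where i: "(c,i) \<in> events I" "per \<tau>0 (c,i) = p" using h(4) unfolding Cp_def courses_at_def by blast
    obtain j where j: "(c',j) \<in> events I" "per \<tau>0 (c',j) = p" using h(5) unfolding Cp_def courses_at_def by blast
    have hh: "(\<lambda>(c', j). c \<noteq> c' \<and>
         ((\<exists>u \<in> curricula I. c \<in> u \<and> c' \<in> u) \<or> teacher I c = teacher I c')
         \<longrightarrow> per \<tau>0 (c, i) \<noteq> per \<tau>0 (c', j)) (c', j)"
      using bspec[OF bspec[OF F4 i(1), unfolded prod.case] j(1)] .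
    have "per \<tau>0 (c, i) \<noteq> per \<tau>0 (c', j)" using hh ne h(1,2,3) by auto
    then show False using i(2) j(2) by simp
  qed
  define ix where "ix c = (THE i. (c,i) \<in> events I \<and> per \<tau>0 (c,i) = p)" for c
  have ix: "(c, ix c) \<in> events I \<and> per \<tau>0 (c, ix c) = p" if h: "c \<in> Cp" for c
  proof -
    obtain i where i: "(c,i) \<in> events I" "per \<tau>0 (c,i) = p" using h unfolding Cp_def courses_at_def by blast
    have "ix c = i" unfolding ix_def using F1 i by blast
    thus ?thesis using i by simp
  qed
  have ix_eq: "i = ix c" if "(c,i) \<in> events I" "per \<tau>0 (c,i) = p" for c i
  proof -
    have "c \<in> Cp" using that unfolding Cp_def courses_at_def by auto
    thus ?thesis using F1 ix that by blast
  qed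
  have inCp: "c \<in> Cp" if "(c,i) \<in> events I" "per \<tau>0 (c,i) = p" for c i
    using that unfolding Cp_def courses_at_def by auto
  have mo: "matching_of I \<tau>0 p \<tau> = (\<lambda>c. (c, room \<tau> (c, ix c))) ` Cp" for \<tau>
  proof
    show "matching_of I \<tau>0 p \<tau> \<subseteq> (\<lambda>c. (c, room \<tau> (c, ix c))) ` Cp"
    proof
      fix x assume "x \<in> matching_of I \<tau>0 p \<tau>"
      then obtain c i where x: "x = (c, room \<tau> (c, i))" "(c, i) \<in> events I" "per \<tau>0 (c, i) = p"
        unfolding matching_of_def by blast
      have "i = ix c" using ix_eq x(2,3) .
      then show "x \<in> (\<lambda>c. (c, room \<tau> (c, ix c))) ` Cp" using x inCp by blast
    qed
    show "(\<lambda>c. (c, room \<tau> (c, ix c))) ` Cp \<subseteq> matching_of I \<tau>0 p \<tau>"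
      unfolding matching_of_def using ix by blast
  qed
  have Nprops: "feasible I \<tau> \<and> (\<forall>ev. per \<tau> ev = per \<tau>0 ev) \<and>
      (\<forall>ev. ev \<notin> events I \<or> per \<tau>0 ev \<noteq> p \<longrightarrow> \<tau> ev = \<tau>0 ev)" if "\<tau> \<in> N" for \<tau>
    using that unfolding N_def room_nbhd_def by auto
  have inj_bij: "inj_on (\<lambda>c. room \<tau> (c, ix c)) Cp \<and> (\<lambda>c. room \<tau> (c, ix c)) ` Cp = rooms I"
    if "\<tau> \<in> N" for \<tau>
  proof -
    have fe: "feasible I \<tau>" and pe: "\<forall>ev. per \<tau> ev = per \<tau>0 ev" using Nprops[OF that] by auto
    have occ: "\<forall>ev \<in> events I. \<forall>ev' \<in> events I. ev \<noteq> ev' \<longrightarrow> \<tau> ev \<noteq> \<tau> ev'"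
      and rin: "\<forall>ev \<in> events I. room \<tau> ev \<in> rooms I"
      using fe unfolding feasible_def by (meson conjunct1 conjunct2)+
    have inj: "inj_on (\<lambda>c. room \<tau> (c, ix c)) Cp"
    proof (rule inj_onI)
      fix c c' assume c: "c \<in> Cp" "c' \<in> Cp" and eq: "room \<tau> (c, ix c) = room \<tau> (c', ix c')"
      have "\<tau> (c, ix c) = \<tau> (c', ix c')" using eq pe ix[OF c(1)] ix[OF c(2)]
        by (metis prod.expand)
      thus "c = c'" using occ ix[OF c(1)] ix[OF c(2)] by blast
    qed
    have sub: "(\<lambda>c. room \<tau> (c, ix c)) ` Cp \<subseteq> rooms I" using rin ix by auto
    have "card ((\<lambda>c. room \<tau> (c, ix c)) ` Cp) = card (rooms I)"
      using card_image[OF inj] assms(4) Cp_def by simp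
    then have "(\<lambda>c. room \<tau> (c, ix c)) ` Cp = rooms I"
      using card_subset_eq[OF finR sub] by simp
    with inj show ?thesis by simp
  qed
  have part1a: "matching_of I \<tau>0 p \<tau> \<in> PM" if "\<tau> \<in> N" for \<tau>
    unfolding mo PM_def using pm_of_bij inj_bij[OF that] by blast
  have part1b: "S \<in> matching_of I \<tau>0 p ` N" if S: "S \<in> PM" for S
  proof -
    have Ssub: "S \<subseteq> Cp \<times> rooms I" and Sa: "\<forall>a\<in>Cp. \<exists>!b. (a, b) \<in> S"
      and Sb: "\<forall>b\<in>rooms I. \<exists>!a. (a, b) \<in> S"
      using S unfolding PM_def perfect_matchings_def by auto
    define \<sigma> where "\<sigma> c = (THE b. (c,b) \<in> S)" for c
    have \<sigma>: "(c, \<sigma> c) \<in> S" if "c \<in> Cp" for c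
      unfolding \<sigma>_def using Sa that by (metis theI')
    have \<sigma>u: "b = \<sigma> c" if "(c,b) \<in> S" for c b
    proof -
      have "c \<in> Cp" using that Ssub by auto
      thus ?thesis using Sa \<sigma> that by blast
    qed
    define \<tau> where "\<tau> ev = (if ev \<in> events I \<and> per \<tau>0 ev = p then (p, \<sigma> (fst ev)) else \<tau>0 ev)" for ev
    have pe: "per \<tau> ev = per \<tau>0 ev" for ev unfolding \<tau>_def by auto
    have feas: "feasible I \<tau>"
      unfolding feasible_def
    proof (intro conjI)
      show "\<forall>ev\<in>events I. per \<tau> ev \<in> periods I \<and> room \<tau> ev \<in> rooms I"
      proof
        fix ev assume ev: "ev \<in> events I"
        obtain c i where ci: "ev = (c,i)" by (cases ev) auto
        show "per \<tau> ev \<in> periods I \<and> room \<tau> ev \<in> rooms I"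
        proof (cases "per \<tau>0 ev = p")
          case True
          then have "c \<in> Cp" using inCp ev ci by auto
          then show ?thesis using True ev ci \<sigma> Ssub assms(2) unfolding \<tau>_def by auto
        next
          case False
          then show ?thesis using F0 ev unfolding \<tau>_def by auto
        qed
      qed
      show "\<forall>c i j. i < lectures I c \<and> j < lectures I c \<and> i \<noteq> j \<and> c \<in> courses I
              \<longrightarrow> per \<tau> (c, i) \<noteq> per \<tau> (c, j)" using F1' pe by simp
      show "\<forall>ev \<in> events I. \<forall>ev' \<in> events I. ev \<noteq> ev' \<longrightarrow> \<tau> ev \<noteq> \<tau> ev'"
      proof (intro ballI impI)
        fix ev ev' assume ev: "ev \<in> events I" and ev': "ev' \<in> events I" and ne: "ev \<noteq> ev'"
        obtain c i where ci: "ev = (c,i)" by (cases ev) auto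
        obtain c' i' where ci': "ev' = (c',i')" by (cases ev') auto
        show "\<tau> ev \<noteq> \<tau> ev'"
        proof (cases "per \<tau>0 ev = p \<and> per \<tau>0 ev' = p")
          case True
          then have cC: "c \<in> Cp" "c' \<in> Cp" using inCp ev ev' ci ci' by auto
          show ?thesis
          proof
            assume "\<tau> ev = \<tau> ev'"
            then have "\<sigma> c = \<sigma> c'" using True ev ev' ci ci' unfolding \<tau>_def by auto
            then have "c = c'" using \<sigma>[OF cC(1)] \<sigma>[OF cC(2)] Sb Ssub cC by (metis SigmaD2 subsetD)
            then have "i = i'" using F1 True ev ev' ci ci' by auto
            then show False using ne ci ci' \<open>c = c'\<close> by simp
          qed
        next
          case False
          show ?thesis
          proof (cases "per \<tau>0 ev = per \<tau>0 ev'")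
            case True
            with False have "per \<tau>0 ev \<noteq> p" "per \<tau>0 ev' \<noteq> p" by auto
            then have "\<tau> ev = \<tau>0 ev" "\<tau> ev' = \<tau>0 ev'" unfolding \<tau>_def by auto
            then show ?thesis using bspec[OF bspec[OF occ0 ev] ev'] ne by simp
          next
            case False
            then show ?thesis using pe[of ev] pe[of ev'] by auto
          qed
        qed
      qed
      show "\<forall>(c, i) \<in> events I. \<forall>(c', j) \<in> events I. c \<noteq> c' \<and>
         ((\<exists>u \<in> curricula I. c \<in> u \<and> c' \<in> u) \<or> teacher I c = teacher I c')
         \<longrightarrow> per \<tau> (c, i) \<noteq> per \<tau> (c', j)" using F4 pe by simp
      show "\<forall>(c, i) \<in> events I. per \<tau> (c, i) \<notin> unavail I c"
        using unav0 pe by simp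
    qed
    have tN: "\<tau> \<in> N" unfolding N_def room_nbhd_def using feas pe unfolding \<tau>_def by auto
    have "matching_of I \<tau>0 p \<tau> = (\<lambda>c. (c, \<sigma> c)) ` Cp"
      unfolding mo using ix unfolding \<tau>_def by auto
    also have "\<dots> = S"
    proof
      show "(\<lambda>c. (c, \<sigma> c)) ` Cp \<subseteq> S" using \<sigma> by auto
      show "S \<subseteq> (\<lambda>c. (c, \<sigma> c)) ` Cp"
      proof
        fix x assume x: "x \<in> S"
        obtain a b where ab: "x = (a,b)" by (cases x) auto
        have "a \<in> Cp" using x ab Ssub by auto
        moreover have "b = \<sigma> a" using \<sigma>u x ab by simp
        ultimately show "x \<in> (\<lambda>c. (c, \<sigma> c)) ` Cp" using ab by auto
      qed
    qed
    finally show ?thesis using tN by blast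
  qed
  have part1: "PM = matching_of I \<tau>0 p ` N" using part1a part1b by blast
  define U where "U c = {u \<in> curricula I. c \<in> u}" for c
  define Ks where "Ks = {u \<in> curricula I. u \<inter> Cp = {}}"
  define K where "K = image_mset (cur_pen I \<tau>0) (mset_set Ks)"
  define W where "W \<tau> = (\<Sum>x\<in>matching_of I \<tau>0 p \<tau>. room_weight I \<tau>0 p x)" for \<tau>
  have dec: "alloc I \<tau> = K + W \<tau>" if tN: "\<tau> \<in> N" for \<tau>
  proof -
    have pe: "\<forall>ev. per \<tau> ev = per \<tau>0 ev"
      and oth: "\<forall>ev. ev \<notin> events I \<or> per \<tau>0 ev \<noteq> p \<longrightarrow> \<tau> ev = \<tau>0 ev"
      using Nprops[OF tN] by auto
    define \<rho> where "\<rho> c = room \<tau> (c, ix c)" for c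
    have "W \<tau> = (\<Sum>c\<in>Cp. room_weight I \<tau>0 p (c, \<rho> c))"
      unfolding W_def mo \<rho>_def by (subst sum.reindex) (auto simp: inj_on_def)
    also have "\<dots> = (\<Sum>c\<in>Cp. image_mset (cur_pen I \<tau>) (mset_set (U c)))"
    proof (rule sum.cong[OF refl])
      fix c assume c: "c \<in> Cp"
      have "image_mset (cur_pen I (assign_room \<tau>0 p c (\<rho> c))) (mset_set (U c))
          = image_mset (cur_pen I \<tau>) (mset_set (U c))"
      proof (rule image_mset_cong)
        fix u assume "u \<in># mset_set (U c)"
        then have u: "u \<in> curricula I" "c \<in> u" unfolding U_def
          using finU by (auto dest: elem_mset_set[THEN iffD1, rotated] simp: finite_subset)
        show "cur_pen I (assign_room \<tau>0 p c (\<rho> c)) u = cur_pen I \<tau> u"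
        proof (rule cur_pen_cong, intro ballI allI impI)
          fix c' i assume c': "c' \<in> u" and i: "i < lectures I c'"
          have ev: "(c',i) \<in> events I" using c' i u curs unfolding events_def by auto
          show "assign_room \<tau>0 p c (\<rho> c) (c', i) = \<tau> (c', i)"
          proof (cases "c' = c")
            case True
            show ?thesis
            proof (cases "per \<tau>0 (c,i) = p")
              case True2: True
              have "i = ix c" using ix_eq ev True True2 by simp
              then show ?thesis unfolding assign_room_def \<rho>_def using True True2 pe
                by (metis fst_conv prod.expand snd_conv)
            next
              case False
              then show ?thesis unfolding assign_room_def using True oth by auto
            qed
          next
            case False
            have "c' \<notin> Cp" using F2 u c' c False by blast
            then have "per \<tau>0 (c',i) \<noteq> p" using inCp ev by blast
            then show ?thesis unfolding assign_room_def using False oth by auto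
          qed
        qed
      qed
      then show "room_weight I \<tau>0 p (c, \<rho> c) = image_mset (cur_pen I \<tau>) (mset_set (U c))"
        unfolding room_weight_def U_def by simp
    qed
    also have "\<dots> = image_mset (cur_pen I \<tau>) (mset_set (\<Union>c\<in>Cp. U c))"
    proof (rule sum_image_mset_UN[OF finCp])
      show "finite (U c)" for c unfolding U_def using finU by simp
      show "U c \<inter> U c' = {}" if "c \<in> Cp" "c' \<in> Cp" "c \<noteq> c'" for c c'
        unfolding U_def using F2 that by blast
    qed
    finally have Weq: "W \<tau> = image_mset (cur_pen I \<tau>) (mset_set (\<Union>c\<in>Cp. U c))" .
    have Keq: "K = image_mset (cur_pen I \<tau>) (mset_set Ks)"
      unfolding K_def
    proof (rule image_mset_cong)
      fix u assume "u \<in># mset_set Ks"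
      then have u: "u \<in> curricula I" "u \<inter> Cp = {}" unfolding Ks_def
        using finU by (auto dest: elem_mset_set[THEN iffD1, rotated] simp: finite_subset)
      show "cur_pen I \<tau>0 u = cur_pen I \<tau> u"
      proof (rule cur_pen_cong, intro ballI allI impI)
        fix c' i assume c': "c' \<in> u" and i: "i < lectures I c'"
        have ev: "(c',i) \<in> events I" using c' i u curs unfolding events_def by auto
        have "per \<tau>0 (c',i) \<noteq> p" using inCp ev u c' by blast
        then show "\<tau>0 (c', i) = \<tau> (c', i)" using oth by auto
      qed
    qed
    have cu: "curricula I = Ks \<union> (\<Union>c\<in>Cp. U c)" and dj: "Ks \<inter> (\<Union>c\<in>Cp. U c) = {}"
      unfolding Ks_def U_def by auto
    have "mset_set (curricula I) = mset_set Ks + mset_set (\<Union>c\<in>Cp. U c)"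
      unfolding cu using finU cu by (intro mset_set_Union[OF _ _ dj]) (simp_all add: finite_subset)
    then show ?thesis unfolding alloc_def Keq Weq by (simp add: image_mset_union)
  qed
  have part2: "max_min_fair I N \<tau> \<longleftrightarrow> glbop_opt PM (room_weight I \<tau>0 p) (matching_of I \<tau>0 p \<tau>)"
    if tN: "\<tau> \<in> N" for \<tau>
  proof -
    have "max_min_fair I N \<tau> \<longleftrightarrow> (\<forall>\<tau>'\<in>N. mset_preceq (K + W \<tau>) (K + W \<tau>'))"
      unfolding max_min_fair_def mset_preceq_def using tN dec by auto
    also have "\<dots> \<longleftrightarrow> (\<forall>\<tau>'\<in>N. mset_preceq (W \<tau>) (W \<tau>'))" by (simp add: preceq_cancel)
    also have "\<dots> \<longleftrightarrow> glbop_opt PM (room_weight I \<tau>0 p) (matching_of I \<tau>0 p \<tau>)"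
      unfolding glbop_opt_def W_def part1 using tN by auto
    finally show ?thesis .
  qed
  show ?thesis using part1 part2 unfolding PM_def N_def Cp_def by blast
qed

end
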